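(* Let $m\geq n\geq 2$. If $S$ is a $\{2\}$-resolving set of $K_m\Box K_n$, and $q$ and $r$ are integers such that $|S|=qm+r$ with $0\leq r<m$, then $$r\binom{n-(q+1)}{2}+(m-r)\binom{n-q}{2}\leq\binom{n}{2}.$$
   Context: $K_m\Box K_n$ has vertices $av$ with $a\in V(K_m)$, $v\in V(K_n)$; distinct $av,bu$ are adjacent iff $a=b$ or $u=v$. $d$ is the shortest-path distance, $d(s,X)=\min_{x\in X}d(s,x)$, $\mathcal{D}_S(X)=(d(s_1,X),\dots,d(s_k,X))$ for $S=\{s_1,\dots,s_k\}$. $S$ is a $\{2\}$-resolving set if $\mathcal{D}_S(X)\neq\mathcal{D}_S(Y)$ for all distinct nonempty vertex sets $X,Y$ with $|X|,|Y|\leq 2$. Binomial coefficients $\binom{a}{2}$ are taken as $a(a-1)/2$ for integers $a$ (in particular $0$ for $a\in\{0,1\}$). *)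

theory Defs
  imports Main "HOL-Library.FuncSet"
begin

definition rook_V :: "nat \<Rightarrow> nat \<Rightarrow> (nat \<times> nat) set" where
  "rook_V m n = {0..<m} \<times> {0..<n}"

definition rook_adj :: "nat \<Rightarrow> nat \<Rightarrow> nat \<times> nat \<Rightarrow> nat \<times> nat \<Rightarrow> bool" where
  "rook_adj m n x y \<longleftrightarrow> x \<in> rook_V m n \<and> y \<in> rook_V m n \<and> x \<noteq> y \<and>
     (fst x = fst y \<or> snd x = snd y)"

definition rook_dist :: "nat \<Rightarrow> nat \<Rightarrow> nat \<times> nat \<Rightarrow> nat \<times> nat \<Rightarrow> nat" where
  "rook_dist m n x y = (LEAST k. (rook_adj m n ^^ k) x y)"

definition rook_setdist :: "nat \<Rightarrow> nat \<Rightarrow> nat \<times> nat \<Rightarrow> (nat \<times> nat) set \<Rightarrow> nat" where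
  "rook_setdist m n s X = Min (rook_dist m n s ` X)"

definition rook_dvec :: "nat \<Rightarrow> nat \<Rightarrow> (nat \<times> nat) set \<Rightarrow> (nat \<times> nat) set \<Rightarrow> (nat \<times> nat \<Rightarrow> nat)" where
  "rook_dvec m n S X = restrict (\<lambda>s. rook_setdist m n s X) S"

definition two_resolving :: "nat \<Rightarrow> nat \<Rightarrow> (nat \<times> nat) set \<Rightarrow> bool" where
  "two_resolving m n S \<longleftrightarrow> S \<subseteq> rook_V m n \<and>
     (\<forall>X Y. X \<subseteq> rook_V m n \<longrightarrow> Y \<subseteq> rook_V m n \<longrightarrow> X \<noteq> {} \<longrightarrow> Y \<noteq> {} \<longrightarrow>
        card X \<le> 2 \<longrightarrow> card Y \<le> 2 \<longrightarrow> X \<noteq> Y \<longrightarrow> rook_dvec m n S X \<noteq> rook_dvec m n S Y)"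

definition binom2 :: "int \<Rightarrow> int" where
  "binom2 a = a * (a - 1) div 2"

end

theory Submission
  imports Defs
begin

lemma rook_dist_eq:
  assumes x: "x \<in> rook_V m n" and y: "y \<in> rook_V m n"
  shows "rook_dist m n x y = (if x = y then 0 else if fst x = fst y \<or> snd x = snd y then 1 else 2)"
proof -
  have p0: "(rook_adj m n ^^ 0) x y \<longleftrightarrow> x = y" by (auto intro: relpowp_0_I elim: relpowp_0_E)
  have p1: "(rook_adj m n ^^ 1) x y \<longleftrightarrow> rook_adj m n x y" by (simp only: relpowp_1)
  show ?thesis
  proof (cases "x = y")
    case True
    then show ?thesis unfolding rook_dist_def using p0 by (auto intro: Least_equality)
  next
    case ne: False
    show ?thesis
    proof (cases "fst x = fst y \<or> snd x = snd y")
      case True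
      then have "rook_adj m n x y" using x y ne by (simp add: rook_adj_def)
      have "(LEAST k. (rook_adj m n ^^ k) x y) = 1"
        proof (rule Least_equality)
        show "(rook_adj m n ^^ 1) x y" using p1 \<open>rook_adj m n x y\<close> by blast
      next
        fix k assume "(rook_adj m n ^^ k) x y"
        then show "1 \<le> k" using p0 ne by (cases k) auto
      qed
      then show ?thesis using True ne by (simp add: rook_dist_def)
    next
      case False
      define z where "z = (fst x, snd y)"
      have z: "rook_adj m n x z" "rook_adj m n z y" using x y False
        by (auto simp: rook_adj_def z_def rook_V_def)
      have "(rook_adj m n ^^ 2) x y"
        using z by (metis relpowp_Suc_I2 relpowp_1 One_nat_def Suc_1)
      moreover have "\<not> (rook_adj m n ^^ k) x y" if "k < 2" for k
      proof -
        have "k = 0 \<or> k = 1" using that by auto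
        then show ?thesis using p0 p1 ne False by (auto simp: rook_adj_def)
      qed
      ultimately have "(LEAST k. (rook_adj m n ^^ k) x y) = 2"
        by (intro Least_equality) (auto simp: not_less[symmetric])
      then show ?thesis using False ne by (simp add: rook_dist_def)
    qed
  qed
qed

lemma rect:
  assumes R: "two_resolving m n S" and ab: "a < m" "b < m" "a \<noteq> b"
    and uv: "u < n" "v < n" "u \<noteq> v"
  shows "(a,u) \<in> S \<or> (a,v) \<in> S \<or> (b,u) \<in> S \<or> (b,v) \<in> S"
proof (rule ccontr)
  assume nS: "\<not> ?thesis"
  define X where "X = {(a,v),(b,u)}"
  define Y where "Y = {(a,u),(b,v)}"
  have V: "(a,u) \<in> rook_V m n" "(a,v) \<in> rook_V m n" "(b,u) \<in> rook_V m n" "(b,v) \<in> rook_V m n"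
    using ab uv by (auto simp: rook_V_def)
  have SV: "S \<subseteq> rook_V m n" using R by (simp add: two_resolving_def)
  have XY: "X \<subseteq> rook_V m n" "Y \<subseteq> rook_V m n" "X \<noteq> {}" "Y \<noteq> {}" "card X \<le> 2" "card Y \<le> 2" "X \<noteq> Y"
    using V ab uv by (auto simp: X_def Y_def card_insert_if)
  have "rook_dvec m n S X = rook_dvec m n S Y"
    unfolding rook_dvec_def
  proof (rule restrict_ext)
    fix s assume s: "s \<in> S"
    then have sV: "s \<in> rook_V m n" using SV by auto
    have ns: "s \<noteq> (a,u)" "s \<noteq> (a,v)" "s \<noteq> (b,u)" "s \<noteq> (b,v)" using s nS by auto
    obtain c w where sc: "s = (c,w)" by (cases s)
    show "rook_setdist m n s X = rook_setdist m n s Y"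
      unfolding rook_setdist_def X_def Y_def using ns sV V
      by (simp add: rook_dist_eq sc min_def)
  qed
  then show False using R XY by (auto simp: two_resolving_def)
qed

lemma b2: "2 * binom2 x = x * (x - 1)"
proof -
  have "even (x * (x - 1))" by simp
  then show ?thesis unfolding binom2_def by (metis dvd_mult_div_cancel)
qed

lemma b2_diff: "binom2 k - binom2 (k - 1) = k - 1"
proof -
  have "2 * binom2 k - 2 * binom2 (k - 1) = 2 * (k - 1)" unfolding b2 by (simp add: algebra_simps)
  then show ?thesis by simp
qed

lemma conv: "binom2 (N - s) \<ge> binom2 (N - q) - (s - q) * (N - q - 1)"
proof -
  have t: "t * (t + 1) \<ge> 0" for t :: int
    by (cases "t \<ge> 0") (auto intro: mult_nonneg_nonneg mult_nonpos_nonpos)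
  have "2 * binom2 (N - s) - 2 * (binom2 (N - q) - (s - q) * (N - q - 1)) = (q - s) * ((q - s) + 1)"
    by (simp add: b2 right_diff_distrib algebra_simps)
  moreover define A where "A = binom2 (N - s)"
  moreover define B where "B = binom2 (N - q) - (s - q) * (N - q - 1)"
  ultimately have "2 * A - 2 * B \<ge> 0" using t[of "q - s"] by simp
  then show ?thesis unfolding A_def B_def by simp
qed

lemma choose2_int: "int (x choose 2) = binom2 (int x)"
proof (cases x)
  case 0 then show ?thesis by (simp add: binom2_def)
next
  case (Suc y)
  then show ?thesis by (simp add: choose_two binom2_def zdiv_int of_nat_mult algebra_simps)
qed

theorem mainTheorem13:
  fixes m n :: nat and S :: "(nat \<times> nat) set" and q r :: int
  assumes "2 \<le> n" and "n \<le> m"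
    and "two_resolving m n S"
    and "int (card S) = q * int m + r" and "0 \<le> r" and "r < int m"
  shows "r * binom2 (int n - (q + 1)) + (int m - r) * binom2 (int n - q) \<le> binom2 (int n)"
proof -
  note R = assms(3)
  have SV: "S \<subseteq> rook_V m n" using R by (simp add: two_resolving_def)
  define T where "T a = {u. (a,u) \<in> S}" for a
  define sa where "sa a = card (T a)" for a
  define C where "C a = {0..<n} - T a" for a
  define P where "P a = {p. p \<subseteq> C a \<and> card p = 2}" for a
  have TV: "T a \<subseteq> {0..<n}" for a using SV by (auto simp: T_def rook_V_def)
  have finT: "finite (T a)" for a using TV finite_subset by blast
  have cardC: "card (C a) = n - sa a" for a
    unfolding C_def sa_def using TV by (simp add: card_Diff_subset finT)
  have cardP: "card (P a) = (n - sa a) choose 2" for a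
    unfolding P_def using n_subsets[of "C a" 2] cardC by (simp add: C_def)
  have disj: "\<forall>a\<in>{0..<m}. \<forall>b\<in>{0..<m}. a \<noteq> b \<longrightarrow> P a \<inter> P b = {}"
  proof (intro ballI impI)
    fix a b assume a: "a \<in> {0..<m}" and b: "b \<in> {0..<m}" and ab: "a \<noteq> b"
    show "P a \<inter> P b = {}"
    proof (rule ccontr)
      assume "P a \<inter> P b \<noteq> {}"
      then obtain p where pa: "p \<in> P a" and pb: "p \<in> P b" by blast
      then obtain u v where p: "p = {u,v}" "u \<noteq> v" by (auto simp: P_def card_2_iff)
      have "u \<in> C a" "v \<in> C a" "u \<in> C b" "v \<in> C b" using pa pb p by (auto simp: P_def)
      then show False using rect[OF R, of a b u v] a b ab p by (auto simp: C_def T_def)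
    qed
  qed
  have sub: "(\<Union>a\<in>{0..<m}. P a) \<subseteq> {p. p \<subseteq> {0..<n} \<and> card p = 2}"
    by (auto simp: P_def C_def)
  have finP: "finite (P a)" for a
    unfolding P_def C_def by (rule finite_subset[of _ "Pow {0..<n}"]) auto
  have "(\<Sum>a\<in>{0..<m}. card (P a)) = card (\<Union>a\<in>{0..<m}. P a)"
    using card_UN_disjoint[of "{0..<m}" P] disj finP by simp
  also have "\<dots> \<le> card {p. p \<subseteq> {0..<n} \<and> card p = 2}"
    by (rule card_mono[OF _ sub]) (rule finite_subset[of _ "Pow {0..<n}"], auto)
  also have "\<dots> = n choose 2" using n_subsets[of "{0..<n}" 2] by simp
  finally have up: "(\<Sum>a\<in>{0..<m}. (n - sa a) choose 2) \<le> n choose 2" by (simp add: cardP)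
  have saN: "sa a \<le> n" for a unfolding sa_def using card_mono[OF _ TV] by fastforce
  have up2: "(\<Sum>a\<in>{0..<m}. binom2 (int n - int (sa a))) \<le> binom2 (int n)"
  proof -
    have "(\<Sum>a\<in>{0..<m}. binom2 (int n - int (sa a))) = int (\<Sum>a\<in>{0..<m}. (n - sa a) choose 2)"
      by (simp add: choose2_int saN of_nat_diff)
    also have "\<dots> \<le> int (n choose 2)" using up by (simp only: of_nat_le_iff)
    finally show ?thesis by (simp add: choose2_int)
  qed
  have "S = Sigma {0..<m} T" using SV by (auto simp: T_def rook_V_def)
  then have cS: "card S = (\<Sum>a\<in>{0..<m}. sa a)" using finT by (simp add: sa_def)
  have sumS: "(\<Sum>a\<in>{0..<m}. int (sa a)) = q * int m + r"
    using assms(4) cS by simp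
  have "(\<Sum>a\<in>{0..<m}. binom2 (int n - q) - (int (sa a) - q) * (int n - q - 1))
        \<le> (\<Sum>a\<in>{0..<m}. binom2 (int n - int (sa a)))"
    by (rule sum_mono) (rule conv)
  also have "(\<Sum>a\<in>{0..<m}. binom2 (int n - q) - (int (sa a) - q) * (int n - q - 1))
     = int m * binom2 (int n - q) - ((\<Sum>a\<in>{0..<m}. int (sa a)) - int m * q) * (int n - q - 1)"
    by (simp add: sum_subtractf sum.distrib sum_distrib_right left_diff_distrib)
  also have "\<dots> = int m * binom2 (int n - q) - r * (int n - q - 1)"
    using sumS by (simp add: algebra_simps)
  finally have low: "int m * binom2 (int n - q) - r * (int n - q - 1) \<le> binom2 (int n)"
    using up2 by linarith
  have "r * binom2 (int n - (q + 1)) + (int m - r) * binom2 (int n - q)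
      = int m * binom2 (int n - q) - r * (binom2 (int n - q) - binom2 (int n - q - 1))"
    by (simp add: algebra_simps)
  also have "\<dots> = int m * binom2 (int n - q) - r * (int n - q - 1)"
    by (simp only: b2_diff)
  finally show ?thesis using low by linarith
qed

end
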